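(* Let $H$ be an even graph (every vertex of even degree) properly embedded in an oriented surface, with edge weights $K_{xy}$ (and fixed square roots $\sqrt{K_{xy}}$). Then \[ \prod_{xy\in E(H)}K_{xy}=\sum_{(M_v)_{v\in V(H)}}\ \prod_{v\in V(H)}(-1)^{\mathrm{cr}(M_v)}\prod_{\{xv,vz\}\in M_v}\sqrt{K_{xv}K_{vz}}, \] where the sum is over all families $(M_v)_{v}$ in which each $M_v$ is a perfect matching of the complete graph $\iota(v,H)$ whose vertex set is the set of edges of $H$ incident to $v$.
   Context: For a perfect matching $M_v$ of $\iota(v,H)$, $\mathrm{cr}(M_v)$ is the number of pairs of matched pairs $\{e_1,e_2\},\{h_1,h_2\}\in M_v$ that cross at $v$, i.e. satisfy $e_1<h_1<e_2<h_2$ in the cyclic order of edges around $v$ induced by the orientation of the surface. *)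

theory Defs
  imports "HOL-Library.FuncSet"
begin

definition simple_graph :: "'v set \<Rightarrow> 'v set set \<Rightarrow> bool" where
  "simple_graph V E \<longleftrightarrow> finite V \<and>
     (\<forall>e\<in>E. \<exists>x y. x \<in> V \<and> y \<in> V \<and> x \<noteq> y \<and> e = {x, y})"

definition incident :: "'v set set \<Rightarrow> 'v \<Rightarrow> 'v set set" where
  "incident E v = {e \<in> E. v \<in> e}"

definition even_graph :: "'v set \<Rightarrow> 'v set set \<Rightarrow> bool" where
  "even_graph V E \<longleftrightarrow> (\<forall>v\<in>V. even (card (incident E v)))"

text \<open>Rotation system: at each vertex a list enumerating the incident edges, read
  cyclically (the cyclic order induced by the orientation of the surface).\<close>
definition rotation_system :: "'v set \<Rightarrow> 'v set set \<Rightarrow> ('v \<Rightarrow> 'v set list) \<Rightarrow> bool" where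
  "rotation_system V E rot \<longleftrightarrow>
     (\<forall>v\<in>V. distinct (rot v) \<and> set (rot v) = incident E v)"

definition perfect_matchings :: "'a set \<Rightarrow> 'a set set set" where
  "perfect_matchings S = {M. (\<forall>p\<in>M. \<exists>a b. a \<in> S \<and> b \<in> S \<and> a \<noteq> b \<and> p = {a, b})
      \<and> (\<forall>p\<in>M. \<forall>q\<in>M. p \<noteq> q \<longrightarrow> p \<inter> q = {}) \<and> \<Union>M = S}"

text \<open>Two matched pairs p, q cross w.r.t. the cyclic order given by xs:
  p = {e1,e2}, q = {h1,h2} with e1 < h1 < e2 < h2 (up to rotation, which is
  equivalent to this linear condition with the roles of p and q possibly swapped).\<close>
definition crosses :: "'a list \<Rightarrow> 'a set \<Rightarrow> 'a set \<Rightarrow> bool" where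
  "crosses xs p q \<longleftrightarrow> (\<exists>i j k l. i < j \<and> j < k \<and> k < l \<and> l < length xs \<and>
      p = {xs ! i, xs ! k} \<and> q = {xs ! j, xs ! l})"

definition cr :: "'a list \<Rightarrow> 'a set set \<Rightarrow> nat" where
  "cr xs M = card {{p, q} | p q. p \<in> M \<and> q \<in> M \<and> crosses xs p q}"

end

theory Submission imports Defs begin


definition crR :: "('a \<Rightarrow> nat) \<Rightarrow> 'a set \<Rightarrow> 'a set \<Rightarrow> bool" where
  "crR r p q \<longleftrightarrow> (\<exists>a b c d. p = {a,c} \<and> q = {b,d} \<and> r a < r b \<and> r b < r c \<and> r c < r d)"

definition CR :: "('a \<Rightarrow> nat) \<Rightarrow> 'a set set \<Rightarrow> 'a set set set" where
  "CR r M = {{p,q} | p q. p \<in> M \<and> q \<in> M \<and> crR r p q}"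

lemma alt_sum:
  assumes "finite T" "inj_on (r::_\<Rightarrow>nat) T"
  shows "(\<Sum>y\<in>T. (-1::'b::comm_ring_1) ^ card {z\<in>T. r z < r y}) = (if even (card T) then 0 else 1)"
  using assms
proof (induction "card T" arbitrary: T rule: less_induct)
  case less
  show ?case
  proof (cases "T = {}")
    case True then show ?thesis by simp
  next
    case False
    obtain m where m: "m \<in> T" "r m = Max (r ` T)"
      using False less.prems by (metis (mono_tags, lifting) Max_in finite_imageI image_iff image_is_empty)
    have mx: "\<And>z. z \<in> T \<Longrightarrow> r z \<le> r m" using m less.prems by simp
    let ?T = "T - {m}"
    have ct: "card ?T < card T" using m less.prems by (meson card_Diff1_less)
    have IH: "(\<Sum>y\<in>?T. (-1::'b) ^ card {z\<in>?T. r z < r y}) = (if even (card ?T) then 0 else 1)"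
      using less.hyps[OF ct] less.prems by (simp add: inj_on_diff)
    have eq1: "\<And>y. y \<in> ?T \<Longrightarrow> {z\<in>T. r z < r y} = {z\<in>?T. r z < r y}"
    proof -
      fix y assume y: "y \<in> ?T"
      have "r y < r m" using mx[of y] y less.prems(2) m(1) by (metis DiffE inj_on_eq_iff insertI1 le_neq_implies_less)
      then show "{z\<in>T. r z < r y} = {z\<in>?T. r z < r y}" by auto
    qed
    have eq2: "{z\<in>T. r z < r m} = ?T"
      using mx less.prems(2) m(1) by (auto simp: inj_on_eq_iff le_neq_implies_less)
    have "(\<Sum>y\<in>T. (-1::'b) ^ card {z\<in>T. r z < r y}) =
          (-1) ^ card {z\<in>T. r z < r m} + (\<Sum>y\<in>?T. (-1::'b) ^ card {z\<in>T. r z < r y})"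
      using m(1) less.prems(1) by (simp add: sum.remove)
    also have "\<dots> = (-1) ^ card ?T + (\<Sum>y\<in>?T. (-1::'b) ^ card {z\<in>?T. r z < r y})"
      using eq1 eq2 by simp
    also have "\<dots> = (if even (card T) then 0 else 1)"
      using IH m(1) less.prems(1) False
      by (cases "card T") (auto simp: card_Diff_singleton)
    finally show ?thesis .
  qed
qed

lemma prod_if_neg:
  assumes "finite M"
  shows "(\<Prod>q\<in>M. if P q then (-1::'b::comm_ring_1) else 1) = (-1) ^ card {q\<in>M. P q}"
proof -
  have "(\<Prod>q\<in>M. if P q then (-1::'b) else 1) = (\<Prod>q\<in>M \<inter> {x. P x}. -1) * (\<Prod>q\<in>M \<inter> - {x. P x}. 1)"
    by (rule prod.If_cases[OF assms])
  also have "\<dots> = (-1) ^ card {q\<in>M. P q}" by (simp add: Collect_conj_eq Int_commute)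
  finally show ?thesis .
qed

lemma pm_finite: "finite S \<Longrightarrow> finite (perfect_matchings S)"
proof -
  assume f: "finite S"
  have "perfect_matchings S \<subseteq> Pow (Pow S)" unfolding perfect_matchings_def by auto
  then show ?thesis using f by (meson finite_Pow_iff finite_subset)
qed

lemma pm_elems: "M \<in> perfect_matchings S \<Longrightarrow> p \<in> M \<Longrightarrow> \<exists>a b. a \<in> S \<and> b \<in> S \<and> a \<noteq> b \<and> p = {a,b}"
  unfolding perfect_matchings_def by blast

lemma pm_disj: "M \<in> perfect_matchings S \<Longrightarrow> p \<in> M \<Longrightarrow> q \<in> M \<Longrightarrow> p \<noteq> q \<Longrightarrow> p \<inter> q = {}"
  unfolding perfect_matchings_def by blast

lemma pm_Union: "M \<in> perfect_matchings S \<Longrightarrow> \<Union>M = S"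
  unfolding perfect_matchings_def by blast

lemma pm_fin: "finite S \<Longrightarrow> M \<in> perfect_matchings S \<Longrightarrow> finite M"
  using pm_Union by (metis finite_UnionD)

lemma parity:
  assumes "finite S" "M \<in> perfect_matchings S" "B \<subseteq> S"
  shows "(-1::'b::comm_ring_1) ^ card B = (-1) ^ card {q\<in>M. card (q \<inter> B) = 1}"
proof -
  have fM: "finite M" using pm_fin assms by blast
  have "B = \<Union>((\<lambda>q. q \<inter> B) ` M)" using pm_Union[OF assms(2)] assms(3) by blast
  moreover have "card (\<Union>((\<lambda>q. q \<inter> B) ` M)) = (\<Sum>q\<in>M. card (q \<inter> B))"
  proof (rule card_UN_disjoint[OF fM])
    show "\<forall>i\<in>M. finite (i \<inter> B)" using pm_elems[OF assms(2)] by fastforce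
    show "\<forall>i\<in>M. \<forall>j\<in>M. i \<noteq> j \<longrightarrow> i \<inter> B \<inter> (j \<inter> B) = {}"
      using pm_disj[OF assms(2)] by blast
  qed
  ultimately have "card B = (\<Sum>q\<in>M. card (q \<inter> B))" by simp
  then have "(-1::'b) ^ card B = (\<Prod>q\<in>M. (-1) ^ card (q \<inter> B))" by (simp add: power_sum)
  also have "\<dots> = (\<Prod>q\<in>M. if card (q \<inter> B) = 1 then (-1::'b) else 1)"
  proof (rule prod.cong[OF refl])
    fix q assume "q \<in> M"
    then obtain a b where "a \<noteq> b" "q = {a,b}" using pm_elems[OF assms(2)] by blast
    then have "card (q \<inter> B) \<in> {0,1,2}" by (cases "a \<in> B"; cases "b \<in> B") auto
    then show "(-1::'b) ^ card (q \<inter> B) = (if card (q \<inter> B) = 1 then -1 else 1)" by auto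
  qed
  also have "\<dots> = (-1) ^ card {q\<in>M. card (q \<inter> B) = 1}" by (rule prod_if_neg[OF fM])
  finally show ?thesis .
qed



lemma pm_decomp:
  assumes "x \<in> S"
  shows "perfect_matchings S = (\<Union>y\<in>S-{x}. insert {x,y} ` perfect_matchings (S-{x,y}))"
proof
  show "perfect_matchings S \<subseteq> (\<Union>y\<in>S-{x}. insert {x,y} ` perfect_matchings (S-{x,y}))"
  proof
    fix M assume M: "M \<in> perfect_matchings S"
    then obtain p where p: "p \<in> M" "x \<in> p" using pm_Union assms by blast
    then obtain a b where ab: "a \<in> S" "b \<in> S" "a \<noteq> b" "p = {a,b}" using pm_elems[OF M] by blast
    obtain y where y: "p = {x,y}" "y \<in> S" "y \<noteq> x" using ab p by blast
    have "M - {p} \<in> perfect_matchings (S-{x,y})"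
      unfolding perfect_matchings_def
    proof (intro CollectI conjI)
      show "\<forall>q\<in>M - {p}. \<exists>a b. a \<in> S - {x, y} \<and> b \<in> S - {x, y} \<and> a \<noteq> b \<and> q = {a, b}"
      proof
        fix q assume q: "q \<in> M - {p}"
        then have "q \<inter> p = {}" using pm_disj[OF M] p by blast
        then show "\<exists>a b. a \<in> S - {x, y} \<and> b \<in> S - {x, y} \<and> a \<noteq> b \<and> q = {a, b}"
          using pm_elems[OF M, of q] q y(1) by auto
      qed
      show "\<forall>pa\<in>M - {p}. \<forall>q\<in>M - {p}. pa \<noteq> q \<longrightarrow> pa \<inter> q = {}" using pm_disj[OF M] by blast
      show "\<Union> (M - {p}) = S - {x, y}"
      proof
        show "\<Union> (M - {p}) \<subseteq> S - {x, y}" using pm_disj[OF M] p pm_Union[OF M] y(1) by blast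
        show "S - {x, y} \<subseteq> \<Union> (M - {p})" using pm_Union[OF M] y(1) by blast
      qed
    qed
    moreover have "M = insert {x,y} (M - {p})" using p y by blast
    ultimately show "M \<in> (\<Union>y\<in>S-{x}. insert {x,y} ` perfect_matchings (S-{x,y}))"
      using y by blast
  qed
next
  show "(\<Union>y\<in>S-{x}. insert {x,y} ` perfect_matchings (S-{x,y})) \<subseteq> perfect_matchings S"
  proof (rule subsetI)
    fix N assume "N \<in> (\<Union>y\<in>S-{x}. insert {x,y} ` perfect_matchings (S-{x,y}))"
    then obtain y M where y: "y \<in> S" "y \<noteq> x" and M: "M \<in> perfect_matchings (S - {x,y})"
      and N: "N = insert {x,y} M" by blast
    show "N \<in> perfect_matchings S" unfolding N
      unfolding perfect_matchings_def
    proof (intro CollectI conjI)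
      show "\<forall>p\<in>insert {x, y} M. \<exists>a b. a \<in> S \<and> b \<in> S \<and> a \<noteq> b \<and> p = {a, b}"
        using pm_elems[OF M] y assms by blast
      show "\<forall>p\<in>insert {x, y} M. \<forall>q\<in>insert {x, y} M. p \<noteq> q \<longrightarrow> p \<inter> q = {}"
        using pm_disj[OF M] pm_Union[OF M] by blast
      show "\<Union> (insert {x, y} M) = S" using pm_Union[OF M] y assms by blast
    qed
  qed
qed

lemma crR_irrefl: "\<not> crR r p p"
  unfolding crR_def by (auto simp: doubleton_eq_iff)

lemma main_comb:
  assumes "finite S" "inj_on r S" "even (card S)"
  shows "(\<Sum>M\<in>perfect_matchings S. (-1::'b::comm_ring_1) ^ card (CR r M)) = 1"
  using assms
proof (induction "card S" arbitrary: S rule: less_induct)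
  case less
  show ?case
  proof (cases "S = {}")
    case True
    have "perfect_matchings S = {{}}"
      unfolding perfect_matchings_def True by auto
    moreover have "CR r {} = {}" unfolding CR_def by simp
    ultimately show ?thesis by simp
  next
    case False
    obtain x where x: "x \<in> S" "r x = Min (r ` S)"
      using False less.prems by (metis (mono_tags, lifting) Min_in finite_imageI image_iff image_is_empty)
    have mn: "\<And>z. z \<in> S \<Longrightarrow> r x \<le> r z" using x less.prems by simp
    define B where "B y = {z\<in>S-{x,y}. r z < r y}" for y
    have step: "(\<Sum>M\<in>perfect_matchings (S-{x,y}). (-1::'b) ^ card (CR r (insert {x,y} M)))
        = (-1) ^ card (B y)" if y: "y \<in> S" "y \<noteq> x" for y
    proof -
      have fS': "finite (S-{x,y})" using less.prems by simp
      have cS': "card (S-{x,y}) < card S" using x y less.prems(1)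
        by (metis Diff_insert2 card_Diff2_less)
      have eS': "even (card (S-{x,y}))" using x y less.prems
        by (simp add: card_Diff_subset)
      have IH: "(\<Sum>M\<in>perfect_matchings (S-{x,y}). (-1::'b) ^ card (CR r M)) = 1"
        using less.hyps[OF cS' fS' _ eS'] less.prems(2) inj_on_diff by blast
      have rxy: "r x < r y" using mn[OF y(1)] less.prems(2) x(1) y by (metis inj_on_eq_iff le_neq_implies_less)
      have trm: "(-1::'b) ^ card (CR r (insert {x,y} M)) = (-1) ^ card (B y) * (-1) ^ card (CR r M)"
        if M: "M \<in> perfect_matchings (S-{x,y})" for M
      proof -
        have fM: "finite M" using pm_fin[OF fS' M] .
        have xyM: "{x,y} \<notin> M" using pm_Union[OF M] by blast
        have cross_iff: "crR r {x,y} q \<longleftrightarrow> card (q \<inter> B y) = 1" if q: "q \<in> M" for q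
        proof -
          obtain b d where bd: "b \<in> S-{x,y}" "d \<in> S-{x,y}" "b \<noteq> d" "q = {b,d}"
            using pm_elems[OF M q] by blast
          have rb: "r x < r b" "r b \<noteq> r y" "r x < r d" "r d \<noteq> r y" "r b \<noteq> r d"
            using bd mn less.prems(2) x(1) y(1)
            by (metis DiffE inj_on_eq_iff insertCI le_neq_implies_less)+
          show ?thesis
          proof
            assume "crR r {x,y} q"
            then obtain a b' c d' where h: "{x,y} = {a,c}" "q = {b',d'}" "r a < r b'" "r b' < r c" "r c < r d'"
              unfolding crR_def by blast
            have "a = x \<and> c = y" using h(1,3,4) rxy by (auto simp: doubleton_eq_iff)
            then have "q \<inter> B y = {b'}" using h bd rb unfolding B_def by (auto simp: doubleton_eq_iff)
            then show "card (q \<inter> B y) = 1" by simp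
          next
            assume c: "card (q \<inter> B y) = 1"
            have "(r b < r y \<and> r y < r d) \<or> (r d < r y \<and> r y < r b)"
            proof (rule ccontr)
              assume "\<not> ?thesis"
              then have "(r b < r y \<and> r d < r y) \<or> (r y < r b \<and> r y < r d)" using rb by linarith
              then have "q \<inter> B y = q \<or> q \<inter> B y = {}" using bd unfolding B_def by auto
              then show False using c bd by auto
            qed
            then show "crR r {x,y} q"
            proof
              assume "r b < r y \<and> r y < r d"
              then show ?thesis unfolding crR_def using rb bd(4)
                by (intro exI[of _ x] exI[of _ b] exI[of _ y] exI[of _ d]) simp
            next
              assume "r d < r y \<and> r y < r b"
              then show ?thesis unfolding crR_def using rb bd(4)
                by (intro exI[of _ x] exI[of _ d] exI[of _ y] exI[of _ b]) (simp add: insert_commute)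
            qed
          qed
        qed
        have noq: "\<not> crR r q {x,y}" if q: "q \<in> M" for q
        proof
          assume "crR r q {x,y}"
          then obtain a b c d where h: "q = {a,c}" "{x,y} = {b,d}" "r a < r b" "r b < r c" "r c < r d"
            unfolding crR_def by blast
          have "a \<in> S" using pm_elems[OF M q] h(1) by (auto simp: doubleton_eq_iff)
          then show False using h mn[of a] rxy by (auto simp: doubleton_eq_iff)
        qed
        have CRi: "CR r (insert {x,y} M) = CR r M \<union> (\<lambda>q. {{x,y},q}) ` {q\<in>M. crR r {x,y} q}"
        proof
          show "CR r (insert {x,y} M) \<subseteq> CR r M \<union> (\<lambda>q. {{x,y},q}) ` {q\<in>M. crR r {x,y} q}"
          proof
            fix s assume "s \<in> CR r (insert {x,y} M)"
            then obtain p q where s: "s = {p,q}" "p \<in> insert {x,y} M" "q \<in> insert {x,y} M" "crR r p q"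
              unfolding CR_def by blast
            show "s \<in> CR r M \<union> (\<lambda>q. {{x,y},q}) ` {q\<in>M. crR r {x,y} q}"
            proof (cases "p = {x,y}")
              case True
              then have "q \<in> M" using s crR_irrefl by blast
              then show ?thesis using s True by blast
            next
              case False
              then have "p \<in> M" using s by blast
              then have "q \<in> M" using s noq by blast
              then show ?thesis using s \<open>p \<in> M\<close> unfolding CR_def by blast
            qed
          qed
          show "CR r M \<union> (\<lambda>q. {{x,y},q}) ` {q\<in>M. crR r {x,y} q} \<subseteq> CR r (insert {x,y} M)"
            unfolding CR_def by blast
        qed
        have fCR: "finite (CR r M)"
        proof -
          have "CR r M \<subseteq> Pow M" unfolding CR_def by auto
          then show ?thesis using fM by (meson finite_Pow_iff finite_subset)
        qed
        have disj: "CR r M \<inter> (\<lambda>q. {{x,y},q}) ` {q\<in>M. crR r {x,y} q} = {}"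
          unfolding CR_def using xyM by (auto simp: doubleton_eq_iff)
        have inj: "inj_on (\<lambda>q. {{x,y},q}) {q\<in>M. crR r {x,y} q}"
          using xyM by (auto simp: inj_on_def doubleton_eq_iff)
        have "card (CR r (insert {x,y} M)) = card (CR r M) + card {q\<in>M. crR r {x,y} q}"
          unfolding CRi using fCR fM disj by (simp add: card_Un_disjoint card_image[OF inj])
        moreover have "{q\<in>M. crR r {x,y} q} = {q\<in>M. card (q \<inter> B y) = 1}" using cross_iff by blast
        moreover have "(-1::'b) ^ card (B y) = (-1) ^ card {q\<in>M. card (q \<inter> B y) = 1}"
          by (rule parity[OF fS' M]) (auto simp: B_def)
        ultimately show ?thesis by (simp add: power_add)
      qed
      have "(\<Sum>M\<in>perfect_matchings (S-{x,y}). (-1::'b) ^ card (CR r (insert {x,y} M)))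
          = (\<Sum>M\<in>perfect_matchings (S-{x,y}). (-1) ^ card (B y) * (-1) ^ card (CR r M))"
        using trm by (rule sum.cong[OF refl])
      also have "\<dots> = (-1) ^ card (B y)" using IH by (simp only: sum_distrib_left[symmetric] mult_1_right)
      finally show ?thesis .
    qed
    have fin_all: "\<forall>y\<in>S-{x}. finite (insert {x,y} ` perfect_matchings (S-{x,y}))"
      using less.prems(1) pm_finite by blast
    have disj_all: "\<forall>y\<in>S-{x}. \<forall>y'\<in>S-{x}. y \<noteq> y' \<longrightarrow>
        insert {x,y} ` perfect_matchings (S-{x,y}) \<inter> insert {x,y'} ` perfect_matchings (S-{x,y'}) = {}"
    proof (intro ballI impI)
      fix y y' assume "y \<in> S-{x}" "y' \<in> S-{x}" "y \<noteq> y'"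
      show "insert {x,y} ` perfect_matchings (S-{x,y}) \<inter> insert {x,y'} ` perfect_matchings (S-{x,y'}) = {}"
      proof (rule ccontr)
        assume "\<not> ?thesis"
        then obtain M M' where M: "M \<in> perfect_matchings (S-{x,y})" "M' \<in> perfect_matchings (S-{x,y'})"
          "insert {x,y} M = insert {x,y'} M'" by blast
        then have "{x,y} \<in> M'" using \<open>y \<noteq> y'\<close> by (metis doubleton_eq_iff insertE insertI1)
        then show False using pm_Union[OF M(2)] by blast
      qed
    qed
    have "(\<Sum>M\<in>perfect_matchings S. (-1::'b) ^ card (CR r M))
       = (\<Sum>y\<in>S-{x}. \<Sum>M\<in>insert {x,y} ` perfect_matchings (S-{x,y}). (-1::'b) ^ card (CR r M))"
      unfolding pm_decomp[OF x(1)]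
      by (rule sum.UNION_disjoint[OF _ fin_all disj_all]) (use less.prems in simp)
    also have "\<dots> = (\<Sum>y\<in>S-{x}. (-1::'b) ^ card (B y))"
    proof (rule sum.cong[OF refl])
      fix y assume y: "y \<in> S-{x}"
      have inj: "inj_on (insert {x,y}) (perfect_matchings (S-{x,y}))"
      proof (rule inj_onI)
        fix M M' assume a: "M \<in> perfect_matchings (S-{x,y})" "M' \<in> perfect_matchings (S-{x,y})"
          "insert {x,y} M = insert {x,y} M'"
        have "{x,y} \<notin> M" "{x,y} \<notin> M'" using pm_Union[OF a(1)] pm_Union[OF a(2)] by blast+
        then show "M = M'" using a(3) by (metis insert_ident)
      qed
      show "(\<Sum>M\<in>insert {x,y} ` perfect_matchings (S-{x,y}). (-1::'b) ^ card (CR r M)) = (-1) ^ card (B y)"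
        using step[of y] y by (simp add: sum.reindex[OF inj])
    qed
    also have "\<dots> = (\<Sum>y\<in>S-{x}. (-1::'b) ^ card {z\<in>S-{x}. r z < r y})"
    proof (rule sum.cong[OF refl])
      fix y assume "y \<in> S-{x}"
      then have "B y = {z\<in>S-{x}. r z < r y}" unfolding B_def by auto
      then show "(-1::'b) ^ card (B y) = (-1) ^ card {z\<in>S-{x}. r z < r y}" by simp
    qed
    also have "\<dots> = 1"
      using alt_sum[of "S-{x}" r] less.prems x(1) False
      by (simp add: inj_on_diff card_Diff_singleton)
    finally show ?thesis .
  qed
qed



definition idx :: "'a list \<Rightarrow> 'a \<Rightarrow> nat" where
  "idx xs a = (THE i. i < length xs \<and> xs ! i = a)"

lemma idx_nth: "distinct xs \<Longrightarrow> i < length xs \<Longrightarrow> idx xs (xs ! i) = i"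
  unfolding idx_def by (rule the_equality) (auto simp: nth_eq_iff_index_eq)

lemma idx_in: "distinct xs \<Longrightarrow> a \<in> set xs \<Longrightarrow> idx xs a < length xs \<and> xs ! idx xs a = a"
  by (metis idx_nth in_set_conv_nth)

lemma crosses_crR:
  assumes "distinct xs" "p \<subseteq> set xs" "q \<subseteq> set xs"
  shows "crosses xs p q \<longleftrightarrow> crR (idx xs) p q"
proof
  assume "crosses xs p q"
  then obtain i j k l where h: "i < j" "j < k" "k < l" "l < length xs"
      "p = {xs ! i, xs ! k}" "q = {xs ! j, xs ! l}" unfolding crosses_def by blast
  show "crR (idx xs) p q" unfolding crR_def
    by (rule exI[of _ "xs!i"], rule exI[of _ "xs!j"], rule exI[of _ "xs!k"], rule exI[of _ "xs!l"])
       (use h assms(1) in \<open>simp add: idx_nth\<close>)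
next
  assume "crR (idx xs) p q"
  then obtain a b c d where h: "p = {a,c}" "q = {b,d}" "idx xs a < idx xs b" "idx xs b < idx xs c" "idx xs c < idx xs d"
    unfolding crR_def by blast
  have m: "a \<in> set xs" "b \<in> set xs" "c \<in> set xs" "d \<in> set xs" using h assms by auto
  show "crosses xs p q" unfolding crosses_def
    by (rule exI[of _ "idx xs a"], rule exI[of _ "idx xs b"], rule exI[of _ "idx xs c"], rule exI[of _ "idx xs d"])
       (use h idx_in[OF assms(1) m(1)] idx_in[OF assms(1) m(2)] idx_in[OF assms(1) m(3)] idx_in[OF assms(1) m(4)] in simp)
qed

lemma cr_CR:
  assumes "distinct xs" "M \<in> perfect_matchings (set xs)"
  shows "cr xs M = card (CR (idx xs) M)"
proof -
  have "\<And>p. p \<in> M \<Longrightarrow> p \<subseteq> set xs" using pm_Union[OF assms(2)] by blast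
  then have eq: "\<And>p q. (p \<in> M \<and> q \<in> M \<and> crosses xs p q) = (p \<in> M \<and> q \<in> M \<and> crR (idx xs) p q)"
    using crosses_crR[OF assms(1)] by blast
  show ?thesis unfolding cr_def CR_def by (simp only: eq)
qed

lemma vertex_sum:
  assumes "distinct xs" "even (length xs)"
  shows "(\<Sum>M\<in>perfect_matchings (set xs). (-1::'b::comm_ring_1) ^ cr xs M) = 1"
proof -
  have "(\<Sum>M\<in>perfect_matchings (set xs). (-1::'b::comm_ring_1) ^ cr xs M)
      = (\<Sum>M\<in>perfect_matchings (set xs). (-1::'b::comm_ring_1) ^ card (CR (idx xs) M))"
    using cr_CR[OF assms(1)] by simp
  also have "\<dots> = 1"
  proof (rule main_comb)
    show "inj_on (idx xs) (set xs)" by (metis assms(1) idx_in inj_onI)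
    show "even (card (set xs))" using assms by (simp add: distinct_card)
  qed simp
  finally show ?thesis .
qed

theorem mainTheorem6:
  fixes V :: "'v set" and E :: "'v set set" and rot :: "'v \<Rightarrow> 'v set list"
    and K sqrtK :: "'v set \<Rightarrow> 'a :: comm_ring_1"
  assumes "simple_graph V E"
    and "even_graph V E"
    and "rotation_system V E rot"
    and "\<And>e. e \<in> E \<Longrightarrow> sqrtK e ^ 2 = K e"
  shows "(\<Prod>e\<in>E. K e) =
    (\<Sum>Ms \<in> PiE V (\<lambda>v. perfect_matchings (incident E v)).
       \<Prod>v\<in>V. (-1) ^ cr (rot v) (Ms v) * (\<Prod>p\<in>Ms v. \<Prod>e\<in>p. sqrtK e))"
proof -
  have fV: "finite V" using assms(1) unfolding simple_graph_def by blast
  have EV: "E \<subseteq> Pow V" using assms(1) unfolding simple_graph_def by auto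
  have fE: "finite E" using EV fV by (meson finite_Pow_iff finite_subset)
  have finc: "finite (incident E v)" for v unfolding incident_def using fE by simp
  have inner: "(\<Sum>M\<in>perfect_matchings (incident E v). (-1) ^ cr (rot v) M * (\<Prod>p\<in>M. \<Prod>e\<in>p. sqrtK e))
      = (\<Prod>e\<in>incident E v. sqrtK e)" if v: "v \<in> V" for v
  proof -
    have rs: "distinct (rot v)" "set (rot v) = incident E v"
      using assms(3) v unfolding rotation_system_def by auto
    have "even (card (incident E v))" using assms(2) v unfolding even_graph_def by blast
    then have ev: "even (length (rot v))" using distinct_card[OF rs(1)] rs(2) by simp
    have pr: "(\<Prod>p\<in>M. \<Prod>e\<in>p. sqrtK e) = (\<Prod>e\<in>incident E v. sqrtK e)"
      if M: "M \<in> perfect_matchings (incident E v)" for M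
    proof -
      have "prod sqrtK (\<Union>M) = (prod \<circ> prod) sqrtK M"
      proof (rule prod.Union_disjoint)
        show "\<forall>A\<in>M. finite A" using pm_elems[OF M] by fastforce
        show "\<forall>A\<in>M. \<forall>B\<in>M. A \<noteq> B \<longrightarrow> A \<inter> B = {}" using pm_disj[OF M] by blast
      qed
      then show ?thesis using pm_Union[OF M] by simp
    qed
    have "(\<Sum>M\<in>perfect_matchings (incident E v). (-1) ^ cr (rot v) M * (\<Prod>p\<in>M. \<Prod>e\<in>p. sqrtK e))
      = (\<Sum>M\<in>perfect_matchings (incident E v). (-1) ^ cr (rot v) M * (\<Prod>e\<in>incident E v. sqrtK e))"
      using pr by simp
    also have "\<dots> = (\<Sum>M\<in>perfect_matchings (set (rot v)). (-1) ^ cr (rot v) M) * (\<Prod>e\<in>incident E v. sqrtK e)"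
      by (simp only: rs(2) sum_distrib_right)
    also have "\<dots> = (\<Prod>e\<in>incident E v. sqrtK e)"
      by (simp only: vertex_sum[OF rs(1) ev] mult_1_left)
    finally show ?thesis .
  qed
  have "(\<Sum>Ms \<in> PiE V (\<lambda>v. perfect_matchings (incident E v)).
       \<Prod>v\<in>V. (-1) ^ cr (rot v) (Ms v) * (\<Prod>p\<in>Ms v. \<Prod>e\<in>p. sqrtK e))
     = (\<Prod>v\<in>V. \<Sum>M\<in>perfect_matchings (incident E v). (-1) ^ cr (rot v) M * (\<Prod>p\<in>M. \<Prod>e\<in>p. sqrtK e))"
    by (rule prod_sum_PiE[symmetric]) (use fV finc pm_finite in auto)
  also have "\<dots> = (\<Prod>v\<in>V. \<Prod>e\<in>incident E v. sqrtK e)"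
    by (rule prod.cong[OF refl]) (rule inner)
  also have "\<dots> = (\<Prod>v\<in>V. \<Prod>e\<in>{e. e \<in> E \<and> v \<in> e}. sqrtK e)"
    unfolding incident_def by simp
  also have "\<dots> = (\<Prod>e\<in>E. \<Prod>v\<in>{v. v \<in> V \<and> v \<in> e}. sqrtK e)"
    by (rule prod.swap_restrict[OF fV fE])
  also have "\<dots> = (\<Prod>e\<in>E. K e)"
  proof (rule prod.cong[OF refl])
    fix e assume e: "e \<in> E"
    then obtain a b where ab: "a \<in> V" "b \<in> V" "a \<noteq> b" "e = {a,b}"
      using assms(1) unfolding simple_graph_def by blast
    then have "{v. v \<in> V \<and> v \<in> e} = {a,b}" by auto
    then show "(\<Prod>v\<in>{v. v \<in> V \<and> v \<in> e}. sqrtK e) = K e"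
      using ab(3) assms(4)[OF e] by (simp add: power2_eq_square)
  qed
  finally show ?thesis by (rule sym)
qed

end
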